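(* Let $n\ge 1$ and let $F:\mathbb{F}_{2^n}\to\mathbb{F}_{2^n}$ be any function, identified with its associated polynomial $F(X)$ over $\mathbb{F}_{2^n}$. Then $$\sum_{b\in \mathbb{F}_{2^n}^*}\ \sum_{v_1,v_2\in \mathbb{F}_{2^n}}W_F(bv_1,v_1)\,W_F(bv_2,v_2)\,W_F(b(v_1+v_2),v_1+v_2)\;+\;2^{n+2}\sum_{v\in \mathbb{F}_{2^n}^*}W_F^2(0,v)\;-\;2^{4n+2}\;+\;2^{3n+2}\;\ge\; 0,$$ and equality holds if and only if $F$ is an o-polynomial.
   Context: For a positive integer $n$, $tr_n:\mathbb{F}_{2^n}\to\mathbb{F}_2$ denotes the absolute trace $tr_n(x)=x+x^2+x^{2^2}+\cdots+x^{2^{n-1}}$, and $\mathbb{F}_{2^n}^*=\mathbb{F}_{2^n}\setminus\{0\}$. For $F:\mathbb{F}_{2^n}\to\mathbb{F}_{2^n}$ and $(u,v)\in\mathbb{F}_{2^n}^2$, the Walsh transform is $W_F(u,v)=\sum_{x\in\mathbb{F}_{2^n}}(-1)^{tr_n(vF(x))+tr_n(ux)}$ (an integer). In the projective plane $PG(2,2^n)$ (points = 1-dimensional subspaces of $\mathbb{F}_{2^n}^3$, lines = 2-dimensional subspaces, incidence = inclusion), a hyperoval is a set of $2^n+2$ points no three of which lie on a common line. A function (polynomial) $F$ over $\mathbb{F}_{2^n}$ is an o-polynomial if the set $\{(1,t,F(t)) : t\in\mathbb{F}_{2^n}\}\cup\{(0,1,0),(0,0,1)\}$ is a hyperoval of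 $PG(2,2^n)$. Equivalently (known fact), $F$ is an o-polynomial if and only if for every $a\in\mathbb{F}_{2^n}$ and every $b\in\mathbb{F}_{2^n}^*$ the equation $F(x)+bx=a$ has either $0$ or $2$ solutions $x\in\mathbb{F}_{2^n}$; in that case $F$ is a permutation of $\mathbb{F}_{2^n}$. *)

theory Defs
  imports Main
begin

definition abs_trace :: "nat \<Rightarrow> 'a::field \<Rightarrow> 'a" where
  "abs_trace n x = (\<Sum>i<n. x ^ (2 ^ i))"

text \<open>The trace value (an element of F_2 = {0,1}) viewed as an exponent 0/1.\<close>
definition trace_bit :: "nat \<Rightarrow> 'a::field \<Rightarrow> nat" where
  "trace_bit n x = (if abs_trace n x = 0 then 0 else 1)"

definition walsh :: "nat \<Rightarrow> ('a::{field,finite} \<Rightarrow> 'a) \<Rightarrow> 'a \<Rightarrow> 'a \<Rightarrow> int" where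
  "walsh n F u v = (\<Sum>x\<in>UNIV. (-1::int) ^ (trace_bit n (v * F x) + trace_bit n (u * x)))"

text \<open>Projective plane PG(2,q): points are 1-dimensional subspaces of F^3, represented by
  nonzero vectors; two representatives give the same point iff they are proportional.
  Lines are 2-dimensional subspaces, i.e. kernels of nonzero linear forms (a,b,c);
  a point p lies on the line l iff p \<subseteq> ker l.\<close>
definition same_point :: "'a::field \<times> 'a \<times> 'a \<Rightarrow> 'a \<times> 'a \<times> 'a \<Rightarrow> bool" where
  "same_point p q = (\<exists>c. c \<noteq> 0 \<and> q = (c * fst p, c * fst (snd p), c * snd (snd p)))"

definition incident :: "'a::field \<times> 'a \<times> 'a \<Rightarrow> 'a \<times> 'a \<times> 'a \<Rightarrow> bool" where
  "incident l p = (fst l * fst p + fst (snd l) * fst (snd p) + snd (snd l) * snd (snd p) = 0)"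

definition hyperoval :: "('a::{field,finite} \<times> 'a \<times> 'a) set \<Rightarrow> bool" where
  "hyperoval P \<longleftrightarrow>
     (\<forall>p\<in>P. p \<noteq> (0,0,0)) \<and>
     (\<forall>p\<in>P. \<forall>q\<in>P. same_point p q \<longrightarrow> p = q) \<and>
     card P = card (UNIV :: 'a set) + 2 \<and>
     (\<forall>p1\<in>P. \<forall>p2\<in>P. \<forall>p3\<in>P. p1 \<noteq> p2 \<and> p1 \<noteq> p3 \<and> p2 \<noteq> p3 \<longrightarrow>
        \<not> (\<exists>l. l \<noteq> (0,0,0) \<and> incident l p1 \<and> incident l p2 \<and> incident l p3))"

definition o_polynomial :: "('a::{field,finite} \<Rightarrow> 'a) \<Rightarrow> bool" where
  "o_polynomial F \<longleftrightarrow>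
     hyperoval ((\<lambda>t. (1, t, F t)) ` UNIV \<union> {(0, 1, 0), (0, 0, 1)})"

end

theory Submission
  imports Defs "HOL-Number_Theory.Residues" "HOL-Computational_Algebra.Computational_Algebra"
begin


lemma three_distinct:
  assumes "3 \<le> card S"
  obtains x y w where "x \<in> S" "y \<in> S" "w \<in> S" "x \<noteq> y" "y \<noteq> w" "x \<noteq> w"
proof -
  obtain T where "T \<subseteq> S" "card T = 3" using obtain_subset_with_card_n[OF assms] by blast
  then show ?thesis using that by (auto simp: card_3_iff)
qed

lemma card_le_2_of_sub:
  assumes "card A \<le> 2" "B \<subseteq> A" "finite A" "p1 \<in> B" "p2 \<in> B" "p3 \<in> B" "p1 \<noteq> p2" "p1 \<noteq> p3" "p2 \<noteq> p3"
  shows False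
proof -
  have "card {p1, p2, p3} \<le> card A" using assms by (intro card_mono) auto
  moreover have "card {p1, p2, p3} = 3" using assms by auto
  ultimately show False using assms(1) by simp
qed

lemma opoly_iff:
  fixes F :: "'a::{field,finite} \<Rightarrow> 'a"
  shows "o_polynomial F \<longleftrightarrow> (\<forall>z. card {x. F x = F z} = 1)
      \<and> (\<forall>b. b \<noteq> 0 \<longrightarrow> (\<forall>z. card {x. F x + b * x = F z + b * z} \<le> 2))"
proof -
  define P where "P = (\<lambda>t. (1::'a, t, F t)) ` UNIV \<union> {(0, 1, 0), (0, 0, 1)}"
  have L1: "\<forall>p\<in>P. p \<noteq> (0,0,0)" unfolding P_def by auto
  have L2: "\<forall>p\<in>P. \<forall>q\<in>P. same_point p q \<longrightarrow> p = q"
    unfolding P_def same_point_def by auto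
  have L3: "card P = card (UNIV :: 'a set) + 2"
  proof -
    have inj: "inj (\<lambda>t. (1::'a, t, F t))" by (auto simp: inj_def)
    have "card ((\<lambda>t. (1::'a, t, F t)) ` UNIV) = card (UNIV :: 'a set)"
      using card_image[OF inj] .
    moreover have "card P = card ((\<lambda>t. (1::'a, t, F t)) ` UNIV) + card {(0::'a, 1::'a, 0::'a), (0, 0, 1)}"
      unfolding P_def by (intro card_Un_disjoint) auto
    ultimately show ?thesis by simp
  qed
  define C where "C = (\<forall>p1\<in>P. \<forall>p2\<in>P. \<forall>p3\<in>P. p1 \<noteq> p2 \<and> p1 \<noteq> p3 \<and> p2 \<noteq> p3 \<longrightarrow>
        \<not> (\<exists>l. l \<noteq> (0,0,0) \<and> incident l p1 \<and> incident l p2 \<and> incident l p3))"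
  have opC: "o_polynomial F \<longleftrightarrow> C"
    unfolding o_polynomial_def hyperoval_def C_def P_def[symmetric] using L1 L2 L3 by blast
  have inc_aff: "incident (a, b, c) (1, t, F t) \<longleftrightarrow> a + b * t + c * F t = 0" for a b c t
    unfolding incident_def by simp
  show ?thesis
  proof
    assume "o_polynomial F"
    hence C using opC by simp
    have m1: "card {x. F x = F z} = 1" for z
    proof (rule ccontr)
      assume ne: "card {x. F x = F z} \<noteq> 1"
      have "z \<in> {x. F x = F z}" by simp
      then obtain y where y: "y \<noteq> z" "F y = F z"
      proof -
        have "{x. F x = F z} \<noteq> {z}" using ne by auto
        thus ?thesis using \<open>z \<in> {x. F x = F z}\<close> that by blast
      qed
      have "incident (- F z, 0, 1) (1, y, F y)" "incident (- F z, 0, 1) (1, z, F z)"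
           "incident (- F z, 0, 1) (0, 1, 0)"
        unfolding incident_def using y by auto
      moreover have "(- F z, 0::'a, 1::'a) \<noteq> (0,0,0)" by simp
      moreover have "(1, y, F y) \<in> P" "(1, z, F z) \<in> P" "(0, 1, 0) \<in> P" unfolding P_def by auto
      ultimately show False using \<open>C\<close> y unfolding C_def by fastforce
    qed
    have m2: "card {x. F x + b * x = F z + b * z} \<le> 2" if "b \<noteq> 0" for b z
    proof (rule ccontr)
      assume "\<not> ?thesis"
      hence "3 \<le> card {x. F x + b * x = F z + b * z}" by simp
      then obtain x1 x2 x3 where xs: "x1 \<in> {x. F x + b * x = F z + b * z}" "x2 \<in> {x. F x + b * x = F z + b * z}"
         "x3 \<in> {x. F x + b * x = F z + b * z}" "x1 \<noteq> x2" "x2 \<noteq> x3" "x1 \<noteq> x3"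
        by (rule three_distinct)
      let ?l = "(- (F z + b * z), b, 1::'a)"
      have "incident ?l (1, x1, F x1)" "incident ?l (1, x2, F x2)" "incident ?l (1, x3, F x3)"
        using xs unfolding incident_def by (auto simp: algebra_simps)
      moreover have "?l \<noteq> (0,0,0)" by simp
      moreover have "(1, x1, F x1) \<in> P" "(1, x2, F x2) \<in> P" "(1, x3, F x3) \<in> P" unfolding P_def by auto
      ultimately show False using \<open>C\<close> xs unfolding C_def by fastforce
    qed
    show "(\<forall>z. card {x. F x = F z} = 1) \<and> (\<forall>b. b \<noteq> 0 \<longrightarrow> (\<forall>z. card {x. F x + b * x = F z + b * z} \<le> 2))"
      using m1 m2 by blast
  next
    assume cond: "(\<forall>z. card {x. F x = F z} = 1) \<and> (\<forall>b. b \<noteq> 0 \<longrightarrow> (\<forall>z. card {x. F x + b * x = F z + b * z} \<le> 2))"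
    have inj: "F x = F y \<Longrightarrow> x = y" for x y
    proof -
      assume "F x = F y"
      hence "x \<in> {u. F u = F y}" "y \<in> {u. F u = F y}" by auto
      moreover have "card {u. F u = F y} = 1" using cond by simp
      then obtain a where "{u. F u = F y} = {a}" by (auto simp: card_1_singleton_iff)
      ultimately show "x = y" by (metis singletonD)
    qed
    have bound: "card {p\<in>P. incident l p} \<le> 2" if "l \<noteq> (0,0,0)" for l
    proof -
      obtain a b c where l: "l = (a, b, c)" by (cases l) auto
      define S where "S = {t. a + b * t + c * F t = 0}"
      have sub: "{p\<in>P. incident l p} \<subseteq> (\<lambda>t. (1::'a, t, F t)) ` S \<union> (if b = 0 then {(0,1,0)} else {})
           \<union> (if c = 0 then {(0,0,1)} else {})"
        unfolding P_def S_def l incident_def by auto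
      have fin: "finite S" by simp
      have "card {p\<in>P. incident l p} \<le> card ((\<lambda>t. (1::'a, t, F t)) ` S \<union> (if b = 0 then {(0,1,0)} else {})
           \<union> (if c = 0 then {(0,0,1)} else {}))"
        by (rule card_mono[OF _ sub]) simp
      also have "\<dots> \<le> card ((\<lambda>t. (1::'a, t, F t)) ` S) + card (if b = 0 then {(0::'a,1::'a,0::'a)} else {})
           + card (if c = 0 then {(0::'a,0::'a,1::'a)} else {})"
        by (meson card_Un_le le_trans add_le_mono order_refl)
      also have "\<dots> \<le> card S + (if b = 0 then 1 else 0) + (if c = 0 then 1 else 0)"
        using card_image_le[OF fin, of "\<lambda>t. (1::'a, t, F t)"] by auto
      also have "\<dots> \<le> 2"
      proof -
        have sub1: "card S \<le> 1" if "\<And>x y. x \<in> S \<Longrightarrow> y \<in> S \<Longrightarrow> x = y"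
          using that card_le_Suc0_iff_eq[OF fin] by simp
        consider "b = 0" "c = 0" | "b = 0" "c \<noteq> 0" | "b \<noteq> 0" "c = 0" | "b \<noteq> 0" "c \<noteq> 0" by blast
        then show ?thesis
        proof cases
          case 1
          then have "a \<noteq> 0" using \<open>l \<noteq> (0,0,0)\<close> l by auto
          hence "S = {}" unfolding S_def using 1 by auto
          thus ?thesis using 1 by simp
        next
          case 2
          have "card S \<le> 1"
          proof (rule sub1)
            fix x y assume "x \<in> S" "y \<in> S"
            hence "c * F x = c * F y" unfolding S_def using 2 by (simp add: eq_neg_iff_add_eq_0[symmetric])
            thus "x = y" using 2 inj by simp
          qed
          thus ?thesis using 2 by simp
        next
          case 3
          have "card S \<le> 1"
          proof (rule sub1)
            fix x y assume "x \<in> S" "y \<in> S"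
            hence "b * x = b * y" unfolding S_def using 3 by (simp add: eq_neg_iff_add_eq_0[symmetric])
            thus "x = y" using 3 by simp
          qed
          thus ?thesis using 3 by simp
        next
          case 4
          have "card S \<le> 2"
          proof (cases "S = {}")
            case True then show ?thesis by simp
          next
            case False
            then obtain t0 where t0: "t0 \<in> S" by blast
            have "S \<subseteq> {x. F x + (b / c) * x = F t0 + (b / c) * t0}"
            proof
              fix x assume "x \<in> S"
              hence "a + b * x + c * F x = a + b * t0 + c * F t0" using t0 unfolding S_def by simp
              hence "c * (F x + (b / c) * x) = c * (F t0 + (b / c) * t0)"
                using 4 by (simp add: algebra_simps)
              thus "x \<in> {x. F x + (b / c) * x = F t0 + (b / c) * t0}" using 4 by simp
            qed
            hence "card S \<le> card {x. F x + (b / c) * x = F t0 + (b / c) * t0}" by (intro card_mono) auto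
            moreover have "b / c \<noteq> 0" using 4 by simp
            ultimately show ?thesis using cond by (meson le_trans)
          qed
          thus ?thesis using 4 by simp
        qed
      qed
      finally show ?thesis .
    qed
    have C
      unfolding C_def
    proof (intro ballI impI notI)
      fix p1 p2 p3 assume ps: "p1 \<in> P" "p2 \<in> P" "p3 \<in> P" "p1 \<noteq> p2 \<and> p1 \<noteq> p3 \<and> p2 \<noteq> p3"
        and ex: "\<exists>l. l \<noteq> (0,0,0) \<and> incident l p1 \<and> incident l p2 \<and> incident l p3"
      then obtain l where l: "l \<noteq> (0,0,0)" "incident l p1" "incident l p2" "incident l p3" by blast

        have sub3: "{p1,p2,p3} \<subseteq> {p\<in>P. incident l p}" using ps l by auto
        show False using card_le_2_of_sub[OF bound[OF l(1)] sub3, of p1 p2 p3] ps by simp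
    qed
    thus "o_polynomial F" using opC by simp
  qed
qed



context
  fixes n :: nat
  assumes n1: "n \<ge> 1" and cardq: "card (UNIV :: 'a::{field,finite} set) = 2 ^ n"
begin

lemma two_eq_zero: "(2::'a) = 0"
proof -
  have pos: "CHAR('a) > 0" by (simp add: finite_imp_CHAR_pos)
  have pr: "prime CHAR('a)" using prime_CHAR_semidom[OF pos] .
  have "CHAR('a) dvd 2 ^ n" using CHAR_dvd_CARD[where 'a='a] cardq by simp
  hence "CHAR('a) dvd 2" using pr prime_dvd_power_nat by blast
  hence "CHAR('a) = 2" using pr by (metis prime_nat_iff two_is_prime_nat not_prime_1)
  hence "of_nat 2 = (0::'a)" by (metis of_nat_CHAR)
  thus ?thesis by simp
qed

lemma plus_self: "(x::'a) + x = 0"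
  using two_eq_zero by (metis mult_2 mult_zero_left)

lemma minus_eq: "- (x::'a) = x"
  using plus_self by (simp add: minus_unique)

lemma sq_sum: "((x::'a) + y) ^ 2 = x ^ 2 + y ^ 2"
  using two_eq_zero by (simp add: power2_sum)

lemma frob: "((x::'a) + y) ^ (2 ^ i) = x ^ (2 ^ i) + y ^ (2 ^ i)"
proof (induction i)
  case 0 then show ?case by simp
next
  case (Suc i)
  have "(x + y) ^ (2 ^ Suc i) = ((x + y) ^ (2 ^ i)) ^ 2" by (simp add: power_mult[symmetric] mult.commute)
  also have "\<dots> = (x ^ (2 ^ i)) ^ 2 + (y ^ (2 ^ i)) ^ 2" using Suc by (simp add: sq_sum)
  also have "\<dots> = x ^ (2 ^ Suc i) + y ^ (2 ^ Suc i)" by (simp add: power_mult[symmetric] mult.commute)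
  finally show ?case .
qed

lemma sq_sum_set: "(\<Sum>i\<in>A. (f i::'a)) ^ 2 = (\<Sum>i\<in>A. f i ^ 2)"
proof (induction A rule: infinite_finite_induct)
  case (infinite A) then show ?case by simp
next
  case empty then show ?case by simp
next
  case (insert x F) then show ?case by (simp add: sq_sum)
qed

lemma trace_add: "abs_trace n ((x::'a) + y) = abs_trace n x + abs_trace n y"
  unfolding abs_trace_def by (simp add: frob sum.distrib)

lemma trace_zero: "abs_trace n (0::'a) = 0"
  unfolding abs_trace_def by (intro sum.neutral) (simp add: zero_power)

lemma fermat: "(x::'a) ^ (2 ^ n) = x"
proof (cases "x = 0")
  case True then show ?thesis by simp
next
  case False
  let ?S = "UNIV - {0::'a}"
  have bij: "bij_betw (\<lambda>y. x * y) ?S ?S"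
    by (rule bij_betwI[where g="\<lambda>y. y / x"]) (use False in auto)
  have "(\<Prod>y\<in>?S. x * y) = (\<Prod>y\<in>?S. y)"
    using prod.reindex_bij_betw[OF bij, of "\<lambda>y. y"] by simp
  moreover have "(\<Prod>y\<in>?S. x * y) = x ^ card ?S * (\<Prod>y\<in>?S. y)"
    by (simp add: prod.distrib)
  moreover have "(\<Prod>y\<in>?S. y) \<noteq> 0" by simp
  ultimately have "x ^ card ?S = 1" by simp
  moreover have "card ?S = 2 ^ n - 1" using cardq by (simp add: card_Diff_subset)
  ultimately have "x ^ (2 ^ n - 1) = 1" by simp
  hence "x ^ (2 ^ n - 1) * x = x" by simp
  moreover have "(2::nat) ^ n - 1 + 1 = 2 ^ n" by simp
  ultimately show ?thesis by (metis power_Suc2 Suc_eq_plus1)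
qed

lemma trace_sq: "(abs_trace n (x::'a)) ^ 2 = abs_trace n x"
proof -
  have "(abs_trace n x) ^ 2 = (\<Sum>i<n. x ^ (2 ^ Suc i))"
    unfolding abs_trace_def sq_sum_set by (simp add: power_mult[symmetric] mult.commute)
  also have "\<dots> = (\<Sum>i<Suc n. x ^ (2 ^ i)) - x ^ (2 ^ 0)"
    by (subst sum.lessThan_Suc_shift) simp
  also have "\<dots> = abs_trace n x"
    unfolding abs_trace_def using fermat by simp
  finally show ?thesis .
qed

lemma trace_01: "abs_trace n (x::'a) = 0 \<or> abs_trace n x = 1"
proof -
  have "abs_trace n x * (abs_trace n x - 1) = 0"
    using trace_sq by (simp add: power2_eq_square algebra_simps)
  thus ?thesis by simp
qed

definition chi :: "'a \<Rightarrow> int" where "chi x = (-1::int) ^ trace_bit n x"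

lemma chi_add: "chi ((x::'a) + y) = chi x * chi y"
proof -
  have "abs_trace n (x + y) = abs_trace n x + abs_trace n y" by (rule trace_add)
  moreover have "(1::'a) + 1 = 0" using plus_self .
  ultimately show ?thesis
    unfolding chi_def trace_bit_def
    using trace_01[of x] trace_01[of y] by auto
qed

lemma chi_zero: "chi (0::'a) = 1"
  unfolding chi_def trace_bit_def by (simp add: trace_zero)

lemma walsh_chi: "walsh n F u v = (\<Sum>x\<in>UNIV. chi (v * F x + u * (x::'a)))"
  unfolding walsh_def chi_add unfolding chi_def by (simp add: power_add)

lemma trace_nontriv: "\<exists>w::'a. abs_trace n w \<noteq> 0"
proof (rule ccontr)
  assume "\<not> ?thesis"
  hence all0: "\<And>w::'a. abs_trace n w = 0" by simp
  define p :: "'a poly" where "p = (\<Sum>i<n. monom 1 (2 ^ i))"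
  have evalp: "poly p x = abs_trace n x" for x
    unfolding p_def abs_trace_def by (simp add: poly_sum poly_monom)
  have "coeff p 1 = (\<Sum>i<n. if 2 ^ i = (1::nat) then 1 else 0)"
    unfolding p_def by (simp add: coeff_sum coeff_monom)
  also have "\<dots> = (\<Sum>i\<in>{0::nat}. 1)"
    by (rule sum.mono_neutral_cong_right) (use n1 in auto)
  finally have "coeff p 1 = 1" by simp
  hence pnz: "p \<noteq> 0" by auto
  have "degree p \<le> 2 ^ (n - 1)"
    unfolding p_def
  proof (rule degree_sum_le)
    fix i assume "i \<in> {..<n}"
    hence "(2::nat) ^ i \<le> 2 ^ (n - 1)" by (intro power_increasing) auto
    thus "degree (monom (1::'a) (2 ^ i)) \<le> 2 ^ (n - 1)" using degree_monom_le order_trans by blast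
  qed simp
  moreover have "card {x. poly p x = 0} \<le> degree p" by (rule card_poly_roots_bound[OF pnz])
  moreover have "{x. poly p x = 0} = UNIV" using evalp all0 by auto
  ultimately have "card (UNIV::'a set) \<le> 2 ^ (n - 1)" by simp
  moreover have "(2::nat) ^ (n - 1) < 2 ^ n" using n1 by (intro power_strict_increasing) auto
  ultimately show False using cardq by linarith
qed

lemma reindex_bij: "bij (h::'a \<Rightarrow> 'a) \<Longrightarrow> (\<Sum>v\<in>UNIV. f (h v)) = (\<Sum>v\<in>UNIV. (f v :: int))"
  using sum.reindex_bij_betw[of h UNIV UNIV f] by simp

lemma char_sum: "(\<Sum>v\<in>UNIV. chi (v * (a::'a))) = (if a = 0 then 2 ^ n else 0)"
proof (cases "a = 0")
  case True then show ?thesis using cardq by (simp add: chi_zero)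
next
  case False
  have b1: "bij (\<lambda>v::'a. v * a)" by (rule bij_betwI[where g="\<lambda>y. y / a"]) (use False in auto)
  have s1: "(\<Sum>v\<in>UNIV. chi (v * a)) = (\<Sum>v\<in>UNIV. chi v)" by (rule reindex_bij[OF b1])
  obtain w :: 'a where w: "abs_trace n w \<noteq> 0" using trace_nontriv by blast
  hence cw: "chi w = -1" unfolding chi_def trace_bit_def by simp
  have b2: "bij (\<lambda>v::'a. v + w)" by (rule bij_betwI[where g="\<lambda>y. y - w"]) auto
  have "(\<Sum>v\<in>UNIV. chi v) = (\<Sum>v\<in>UNIV. chi (v + w))" by (rule reindex_bij[OF b2, symmetric])
  also have "\<dots> = - (\<Sum>v\<in>UNIV. chi v)" by (simp add: chi_add cw sum_negf)
  finally have "(\<Sum>v\<in>UNIV. chi v) = 0" by simp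
  thus ?thesis using s1 False by simp
qed

lemma eq_iff_sum0: "((x::'a) + y = 0) = (x = y)"
  by (metis add_right_cancel plus_self)

lemma keyA: "(\<Sum>v\<in>UNIV. (\<Sum>x\<in>UNIV. chi (v * (G::'a\<Rightarrow>'a) x)) * chi (v * (c::'a)))
   = 2 ^ n * int (card {x. G x = c})"
proof -
  have "(\<Sum>v\<in>UNIV. (\<Sum>x\<in>UNIV. chi (v * G x)) * chi (v * c))
      = (\<Sum>v\<in>UNIV. \<Sum>x\<in>UNIV. chi (v * (G x + c)))"
    by (simp add: sum_distrib_right chi_add distrib_left)
  also have "\<dots> = (\<Sum>x\<in>UNIV. \<Sum>v\<in>UNIV. chi (v * (G x + c)))" by (rule sum.swap)
  also have "\<dots> = (\<Sum>x\<in>UNIV. if G x = c then 2 ^ n else 0)"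
    by (simp add: char_sum eq_iff_sum0)
  also have "\<dots> = 2 ^ n * int (card {x. G x = c})"
    using sum.inter_filter[of UNIV "\<lambda>_. (2::int)^n" "\<lambda>x. G x = c", symmetric] by (simp add: mult.commute)
  finally show ?thesis .
qed

lemma triple:
  fixes G :: "'a \<Rightarrow> 'a"
  defines "W \<equiv> \<lambda>v. (\<Sum>x\<in>UNIV. chi (v * G x))"
  shows "(\<Sum>v1\<in>UNIV. \<Sum>v2\<in>UNIV. W v1 * W v2 * W (v1 + v2))
     = (\<Sum>z\<in>UNIV. (2 ^ n * int (card {x. G x = G z})) ^ 2)"
proof -
  have Wadd: "W (v1 + v2) = (\<Sum>z\<in>UNIV. chi (v1 * G z) * chi (v2 * G z))" for v1 v2
    unfolding W_def by (simp add: distrib_right chi_add)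
  have "(\<Sum>v1\<in>UNIV. \<Sum>v2\<in>UNIV. W v1 * W v2 * W (v1 + v2))
     = (\<Sum>v1\<in>UNIV. \<Sum>v2\<in>UNIV. \<Sum>z\<in>UNIV. (W v1 * chi (v1 * G z)) * (W v2 * chi (v2 * G z)))"
    unfolding Wadd by (simp add: sum_distrib_left mult_ac)
  also have "\<dots> = (\<Sum>v1\<in>UNIV. \<Sum>z\<in>UNIV. \<Sum>v2\<in>UNIV. (W v1 * chi (v1 * G z)) * (W v2 * chi (v2 * G z)))"
    by (intro sum.cong refl sum.swap)
  also have "\<dots> = (\<Sum>z\<in>UNIV. \<Sum>v1\<in>UNIV. \<Sum>v2\<in>UNIV. (W v1 * chi (v1 * G z)) * (W v2 * chi (v2 * G z)))"
    by (rule sum.swap)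
  also have "\<dots> = (\<Sum>z\<in>UNIV. (\<Sum>v1\<in>UNIV. W v1 * chi (v1 * G z)) * (\<Sum>v2\<in>UNIV. W v2 * chi (v2 * G z)))"
    by (simp add: sum_product)
  also have "\<dots> = (\<Sum>z\<in>UNIV. (2 ^ n * int (card {x. G x = G z})) ^ 2)"
    unfolding W_def keyA by (simp add: power2_eq_square)
  finally show ?thesis .
qed

lemma walsh_b: "walsh n F (b * v) v = (\<Sum>x\<in>UNIV. chi (v * (F x + b * (x::'a))))"
  unfolding walsh_chi by (simp add: algebra_simps)

lemma walsh_0: "walsh n F 0 v = (\<Sum>x\<in>UNIV. chi (v * F (x::'a)))"
  unfolding walsh_chi by simp

lemma sq_part: "(\<Sum>v\<in>UNIV - {0}. (walsh n F 0 v)\<^sup>2)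
   = 2 ^ n * (\<Sum>z\<in>UNIV. int (card {x. F x = F (z::'a)})) - 2 ^ n * 2 ^ n"
proof -
  have "(\<Sum>v\<in>UNIV. (walsh n F 0 v)\<^sup>2) = (\<Sum>v\<in>UNIV. \<Sum>z\<in>UNIV. walsh n F 0 v * chi (v * F z))"
    by (simp add: power2_eq_square sum_distrib_left walsh_0[of F])
  also have "\<dots> = (\<Sum>z\<in>UNIV. \<Sum>v\<in>UNIV. walsh n F 0 v * chi (v * F z))" by (rule sum.swap)
  also have "\<dots> = (\<Sum>z\<in>UNIV. 2 ^ n * int (card {x. F x = F z}))"
    unfolding walsh_0 keyA by simp
  finally have A: "(\<Sum>v\<in>UNIV. (walsh n F 0 v)\<^sup>2) = 2 ^ n * (\<Sum>z\<in>UNIV. int (card {x. F x = F z}))"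
    by (simp add: sum_distrib_left)
  have B: "walsh n F 0 0 = 2 ^ n" unfolding walsh_0 using cardq by (simp add: chi_zero)
  have "(\<Sum>v\<in>UNIV - {0}. (walsh n F 0 v)\<^sup>2) = (\<Sum>v\<in>UNIV. (walsh n F 0 v)\<^sup>2) - (walsh n F 0 0)\<^sup>2"
    by (simp add: sum_diff1)
  thus ?thesis using A B by (simp add: power2_eq_square)
qed

lemma pair_count:
  fixes F :: "'a \<Rightarrow> 'a"
  shows "(\<Sum>b\<in>UNIV - {0}. \<Sum>z\<in>UNIV. int (card {x. F x + b * x = F z + b * z}))
     = 2 * 2 ^ n * 2 ^ n - 2 ^ n - (\<Sum>z\<in>UNIV. int (card {x. F x = F z}))"
proof -
  let ?B = "UNIV - {0::'a}"
  have cB: "card ?B = 2 ^ n - 1" using cardq by (simp add: card_Diff_subset)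
  have set_eq: "{b\<in>?B. F x + b * x = F z + b * z} =
     (if x = z then ?B else if F x = F z then {} else {(F z - F x) / (x - z)})" for x z
  proof (cases "x = z")
    case True then show ?thesis by auto
  next
    case False
    have iff: "F x + b * x = F z + b * z \<longleftrightarrow> b = (F z - F x) / (x - z)" for b
      using False by (auto simp: field_simps)
    show ?thesis using False by (auto simp: iff)
  qed
  have inner: "(\<Sum>b\<in>?B. (if F x + b * x = F z + b * z then 1 else (0::int)))
      = (if x = z then 2 ^ n - 1 else 0) + (if F x = F z then 0 else 1)" for x z
  proof -
    have "(\<Sum>b\<in>?B. (if F x + b * x = F z + b * z then 1 else (0::int)))
        = int (card {b\<in>?B. F x + b * x = F z + b * z})"
      using sum.inter_filter[of ?B "\<lambda>_. (1::int)" "\<lambda>b. F x + b * x = F z + b * z", symmetric]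
      by simp
    also have "\<dots> = (if x = z then 2 ^ n - 1 else 0) + (if F x = F z then 0 else 1)"
      unfolding set_eq using cB n1 by (auto simp: of_nat_diff)
    finally show ?thesis .
  qed
  have card_sum: "int (card {x. P x}) = (\<Sum>x\<in>UNIV. (if P x then 1 else (0::int)))" for P :: "'a \<Rightarrow> bool"
    using sum.inter_filter[of UNIV "\<lambda>_. (1::int)" P, symmetric] by simp
  have "(\<Sum>b\<in>?B. \<Sum>z\<in>UNIV. int (card {x. F x + b * x = F z + b * z}))
      = (\<Sum>z\<in>UNIV. \<Sum>x\<in>UNIV. \<Sum>b\<in>?B. (if F x + b * x = F z + b * z then 1 else (0::int)))"
    unfolding card_sum by (subst sum.swap) (simp add: sum.swap[of _ ?B])
  also have "\<dots> = (\<Sum>z\<in>UNIV. \<Sum>x\<in>UNIV. (if x = z then 2 ^ n - 1 else 0) + (1 - (if F x = F z then 1 else (0::int))))"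
    unfolding inner by (intro sum.cong refl) auto
  also have "\<dots> = (\<Sum>z\<in>UNIV. (2 ^ n - 1) + 2 ^ n - int (card {x. F x = F z}))"
    unfolding card_sum using cardq by (simp add: sum.distrib sum_subtractf) (simp add: algebra_simps)
  also have "\<dots> = 2 * 2 ^ n * 2 ^ n - 2 ^ n - (\<Sum>z\<in>UNIV. int (card {x. F x = F z}))"
    using cardq by (simp add: sum_subtractf algebra_simps sum.distrib)
  finally show ?thesis .
qed

lemma main_identity:
  fixes F :: "'a \<Rightarrow> 'a"
  defines "nb \<equiv> \<lambda>b z. int (card {x. F x + b * x = F z + b * z})"
  defines "m \<equiv> \<lambda>z. int (card {x. F x = F z})"
  shows "(\<Sum>b\<in>UNIV - {0}. \<Sum>v1\<in>UNIV. \<Sum>v2\<in>UNIV.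
            walsh n F (b * v1) v1 * walsh n F (b * v2) v2 * walsh n F (b * (v1 + v2)) (v1 + v2))
         + 2 ^ (n + 2) * (\<Sum>v\<in>UNIV - {0}. (walsh n F 0 v)\<^sup>2)
         - 2 ^ (4 * n + 2) + 2 ^ (3 * n + 2)
       = (2 ^ n) ^ 2 * ((\<Sum>b\<in>UNIV - {0}. \<Sum>z\<in>UNIV. (nb b z - 1) * (nb b z - 2))
            + (\<Sum>z\<in>UNIV. m z - 1))"
proof -
  define q :: int where "q = 2 ^ n"
  let ?B = "UNIV - {0::'a}"
  have T: "(\<Sum>v1\<in>UNIV. \<Sum>v2\<in>UNIV.
            walsh n F (b * v1) v1 * walsh n F (b * v2) v2 * walsh n F (b * (v1 + v2)) (v1 + v2))
        = q ^ 2 * (\<Sum>z\<in>UNIV. (nb b z) ^ 2)" for b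
    using triple[of "\<lambda>x. F x + b * x"] unfolding walsh_b nb_def q_def
    by (simp add: power_mult_distrib sum_distrib_left)
  define X where "X = (\<Sum>b\<in>?B. \<Sum>z\<in>UNIV. (nb b z) ^ 2)"
  define Y where "Y = (\<Sum>b\<in>?B. \<Sum>z\<in>UNIV. nb b z)"
  define M where "M = (\<Sum>z\<in>UNIV. m z)"
  have Y: "Y = 2 * q * q - q - M" unfolding Y_def M_def nb_def m_def q_def by (rule pair_count)
  have S: "(\<Sum>v\<in>UNIV - {0}. (walsh n F 0 v)\<^sup>2) = q * M - q * q"
    unfolding M_def m_def q_def by (rule sq_part)
  have cB: "int (card ?B) = q - 1" using cardq n1 unfolding q_def by (simp add: card_Diff_subset of_nat_diff)
  have cU: "int (card (UNIV::'a set)) = q" using cardq unfolding q_def by simp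
  have E: "(\<Sum>b\<in>?B. \<Sum>z\<in>UNIV. (nb b z - 1) * (nb b z - 2)) = X - 3 * Y + 2 * (q - 1) * q"
  proof -
    have "(\<Sum>b\<in>?B. \<Sum>z\<in>UNIV. (nb b z - 1) * (nb b z - 2))
        = (\<Sum>b\<in>?B. \<Sum>z\<in>UNIV. ((nb b z) ^ 2 - 3 * nb b z + 2))"
      by (intro sum.cong refl) (simp add: algebra_simps power2_eq_square)
    also have "\<dots> = X - 3 * Y + 2 * (q - 1) * q"
      unfolding X_def Y_def using cB cU
      by (simp add: sum.distrib sum_subtractf sum_distrib_left algebra_simps)
    finally show ?thesis .
  qed
  have SM: "(\<Sum>z\<in>UNIV. m z - 1) = M - q" unfolding M_def using cU by (simp add: sum_subtractf)
  have p1: "(2::int) ^ (n + 2) = 4 * q" unfolding q_def by (simp add: power_add)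
  have p2: "(2::int) ^ (4 * n + 2) = 4 * q ^ 4" unfolding q_def by (simp add: power_add power_mult mult.commute)
  have p3: "(2::int) ^ (3 * n + 2) = 4 * q ^ 3" unfolding q_def by (simp add: power_add power_mult mult.commute)
  have L: "(\<Sum>b\<in>?B. \<Sum>v1\<in>UNIV. \<Sum>v2\<in>UNIV.
            walsh n F (b * v1) v1 * walsh n F (b * v2) v2 * walsh n F (b * (v1 + v2)) (v1 + v2)) = q ^ 2 * X"
    unfolding T X_def by (simp add: sum_distrib_left)
  show ?thesis
    unfolding L S E SM p1 p2 p3 q_def[symmetric] Y
    by (simp add: algebra_simps power2_eq_square power3_eq_cube power4_eq_xxxx)
qed

end

theorem theorem2:
  fixes F :: "'a::{field,finite} \<Rightarrow> 'a" and n :: nat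
  assumes "n \<ge> 1" and "card (UNIV :: 'a set) = 2 ^ n"
  shows "(\<Sum>b\<in>UNIV - {0}. \<Sum>v1\<in>UNIV. \<Sum>v2\<in>UNIV.
            walsh n F (b * v1) v1 * walsh n F (b * v2) v2 * walsh n F (b * (v1 + v2)) (v1 + v2))
         + 2 ^ (n + 2) * (\<Sum>v\<in>UNIV - {0}. (walsh n F 0 v)\<^sup>2)
         - 2 ^ (4 * n + 2) + 2 ^ (3 * n + 2) \<ge> 0
      \<and> ((\<Sum>b\<in>UNIV - {0}. \<Sum>v1\<in>UNIV. \<Sum>v2\<in>UNIV.
            walsh n F (b * v1) v1 * walsh n F (b * v2) v2 * walsh n F (b * (v1 + v2)) (v1 + v2))
         + 2 ^ (n + 2) * (\<Sum>v\<in>UNIV - {0}. (walsh n F 0 v)\<^sup>2)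
         - 2 ^ (4 * n + 2) + 2 ^ (3 * n + 2) = 0 \<longleftrightarrow> o_polynomial F)"
proof -
  define nb where "nb = (\<lambda>b z. int (card {x. F x + b * x = F z + b * z}))"
  define m where "m = (\<lambda>z. int (card {x. F x = F z}))"
  define SE where "SE = (\<Sum>b\<in>UNIV - {0}. \<Sum>z\<in>UNIV. (nb b z - 1) * (nb b z - 2))"
  define SM where "SM = (\<Sum>z\<in>UNIV. m z - 1)"
  have eq: "(\<Sum>b\<in>UNIV - {0}. \<Sum>v1\<in>UNIV. \<Sum>v2\<in>UNIV.
            walsh n F (b * v1) v1 * walsh n F (b * v2) v2 * walsh n F (b * (v1 + v2)) (v1 + v2))
         + 2 ^ (n + 2) * (\<Sum>v\<in>UNIV - {0}. (walsh n F 0 v)\<^sup>2)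
         - 2 ^ (4 * n + 2) + 2 ^ (3 * n + 2) = (2 ^ n) ^ 2 * (SE + SM)"
    unfolding SE_def SM_def nb_def m_def by (rule main_identity[OF assms])
  have nb1: "nb b z \<ge> 1" for b z
  proof -
    have "z \<in> {x. F x + b * x = F z + b * z}" by simp
    hence "card {x. F x + b * x = F z + b * z} > 0" by (auto simp: card_gt_0_iff)
    thus ?thesis unfolding nb_def by simp
  qed
  have m1: "m z \<ge> 1" for z
  proof -
    have "z \<in> {x. F x = F z}" by simp
    hence "card {x. F x = F z} > 0" by (auto simp: card_gt_0_iff)
    thus ?thesis unfolding m_def by simp
  qed
  have e0: "(nb b z - 1) * (nb b z - 2) \<ge> 0" for b z
  proof (cases "nb b z = 1")
    case True then show ?thesis by simp
  next
    case False then have "nb b z \<ge> 2" using nb1[of b z] by simp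
    then show ?thesis by simp
  qed
  have e0iff: "(nb b z - 1) * (nb b z - 2) = 0 \<longleftrightarrow> nb b z \<le> 2" for b z
    using nb1[of b z] by auto
  have inner0: "(\<Sum>z\<in>UNIV. (nb b z - 1) * (nb b z - 2)) \<ge> 0" for b
    using e0 by (simp add: sum_nonneg)
  have SE0: "SE \<ge> 0" unfolding SE_def using inner0 by (simp add: sum_nonneg)
  have SM0: "SM \<ge> 0" unfolding SM_def by (intro sum_nonneg) (metis m1 diff_ge_0_iff_ge)
  have qpos: "(2::int) ^ n > 0" by simp
  have part1: "(2 ^ n) ^ 2 * (SE + SM) \<ge> (0::int)" using SE0 SM0 by simp
  have "(2 ^ n) ^ 2 * (SE + SM) = (0::int) \<longleftrightarrow> SE = 0 \<and> SM = 0"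
    using SE0 SM0 qpos by auto
  also have "SE = 0 \<longleftrightarrow> (\<forall>b. b \<noteq> 0 \<longrightarrow> (\<forall>z. nb b z \<le> 2))"
  proof -
    have "SE = 0 \<longleftrightarrow> (\<forall>b\<in>UNIV - {0}. (\<Sum>z\<in>UNIV. (nb b z - 1) * (nb b z - 2)) = 0)"
      unfolding SE_def using inner0 by (intro sum_nonneg_eq_0_iff) auto
    also have "\<dots> \<longleftrightarrow> (\<forall>b\<in>UNIV - {0}. \<forall>z. (nb b z - 1) * (nb b z - 2) = 0)"
      using e0 by (simp add: sum_nonneg_eq_0_iff)
    finally show ?thesis using e0iff by auto
  qed
  also have "SM = 0 \<longleftrightarrow> (\<forall>z. m z = 1)"
  proof -
    have "SM = 0 \<longleftrightarrow> (\<forall>z. m z - 1 = 0)"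
    proof -
      have "\<forall>x. 0 \<le> m x - 1" by (metis m1 diff_ge_0_iff_ge)
      then show ?thesis using sum_nonneg_eq_0_iff[of UNIV "\<lambda>z. m z - 1"] unfolding SM_def by simp
    qed
    thus ?thesis by simp
  qed
  also have "(\<forall>b. b \<noteq> 0 \<longrightarrow> (\<forall>z. nb b z \<le> 2)) \<and> (\<forall>z. m z = 1) \<longleftrightarrow> o_polynomial F"
    unfolding opoly_iff nb_def m_def by auto
  finally have part2: "(2 ^ n) ^ 2 * (SE + SM) = (0::int) \<longleftrightarrow> o_polynomial F" .
  show ?thesis unfolding eq using part1 part2 by simp
qed

end
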